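(* Let $t\ge0$ and $i\ge -t$ be integers. Let $\Phi(z)=\sum_{n\ge0}c_nz^n$, where $c_n$ is the number of Deutsch paths of $n$ steps from $(0,0)$ to $(n,i)$ that never go below level $-t$. Let $v=v(z)$ be the power series with $v(0)=0$ satisfying $z=\frac{v}{1+v+v^2}$. Then $$\Phi(z)=\frac{(1+v)^{-i-2}(1-v^{i+t+1})\,v\,(1+v+v^2)}{1-v}\quad\text{for } i<0,$$ $$\Phi(z)=\frac{v^{i}(1-v^{t+2})(1+v+v^2)}{(1-v)(1+v)^{i+2}}\quad\text{for } i\ge0.$$
   Context: A Deutsch path is a lattice path whose steps are up-steps $(1,1)$ and down-steps $(1,-k)$ for any integer $k\ge1$. The series $v$ is given explicitly by $v=\frac{1-z-\sqrt{1-2z-3z^2}}{2z}$. *)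

theory Defs
  imports "HOL-Computational_Algebra.Formal_Power_Series"
begin

text \<open>A Deutsch path of n steps is encoded by its list of vertical displacements:
  each step is an up-step (+1) or a down-step (-k) with k \<ge> 1.\<close>
definition deutsch_step :: "int \<Rightarrow> bool" where
  "deutsch_step s \<longleftrightarrow> s = 1 \<or> s \<le> -1"

definition deutsch_paths :: "int \<Rightarrow> int \<Rightarrow> nat \<Rightarrow> int list set" where
  "deutsch_paths t i n = {ss. length ss = n \<and> (\<forall>s\<in>set ss. deutsch_step s)
      \<and> sum_list ss = i \<and> (\<forall>k\<le>n. sum_list (take k ss) \<ge> -t)}"

definition deutsch_count :: "int \<Rightarrow> int \<Rightarrow> nat \<Rightarrow> nat" where
  "deutsch_count t i n = card (deutsch_paths t i n)"

end

theory Submission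
  imports Defs
begin
lemma sum_list_le_len: "(\<forall>s\<in>set ss. s \<le> (1::int)) \<Longrightarrow> sum_list ss \<le> int (length ss)"
  by (induction ss) auto

lemma paths_le: "ss \<in> deutsch_paths t i n \<Longrightarrow> i \<le> int n"
  unfolding deutsch_paths_def deutsch_step_def
  using sum_list_le_len[of ss] by fastforce

lemma paths_0: "t \<ge> 0 \<Longrightarrow> deutsch_paths t i 0 = (if i = 0 then {[]} else {})"
  unfolding deutsch_paths_def by auto

lemma paths_Suc_neg: "i < -t \<Longrightarrow> deutsch_paths t i (Suc n) = {}"
  unfolding deutsch_paths_def
  by (auto dest!: spec[of _ "Suc n"])

lemma paths_Suc:
  assumes "i \<ge> -t"
  shows "deutsch_paths t i (Suc n) = (\<Union>s\<in>insert 1 {i - int n..-1}. (\<lambda>ss. ss@[s]) ` deutsch_paths t (i-s) n)"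
proof (intro equalityI subsetI)
  fix ss assume ss: "ss \<in> deutsch_paths t i (Suc n)"
  then have len: "length ss = Suc n" by (simp add: deutsch_paths_def)
  then have ne: "ss \<noteq> []" by auto
  define ys where "ys = butlast ss"
  define s where "s = last ss"
  have eq: "ss = ys @ [s]" using ne by (simp add: ys_def s_def)
  have ys: "ys \<in> deutsch_paths t (i - s) n"
    unfolding deutsch_paths_def
  proof (intro CollectI conjI allI impI ballI)
    show "length ys = n" using len by (simp add: ys_def)
    show "deutsch_step x" if "x \<in> set ys" for x
      using ss that unfolding deutsch_paths_def eq by auto
    show "sum_list ys = i - s" using ss unfolding deutsch_paths_def eq by auto
    show "- t \<le> sum_list (take k ys)" if "k \<le> n" for k
    proof -
      have "take k ss = take k ys" using that len unfolding eq by simp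
      moreover have "- t \<le> sum_list (take k ss)" using ss that unfolding deutsch_paths_def by auto
      ultimately show ?thesis by simp
    qed
  qed
  have st: "deutsch_step s" using ss unfolding deutsch_paths_def eq by auto
  have "i - s \<le> int n" using paths_le[OF ys] .
  then have "s \<in> insert 1 {i - int n..-1}" using st unfolding deutsch_step_def by auto
  then show "ss \<in> (\<Union>s\<in>insert 1 {i - int n..-1}. (\<lambda>ss. ss@[s]) ` deutsch_paths t (i-s) n)"
    using ys eq by blast
next
  fix ss assume "ss \<in> (\<Union>s\<in>insert 1 {i - int n..-1}. (\<lambda>ss. ss@[s]) ` deutsch_paths t (i-s) n)"
  then obtain s ys where s: "s \<in> insert 1 {i - int n..-1}" and ys: "ys \<in> deutsch_paths t (i-s) n"
    and eq: "ss = ys @ [s]" by blast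
  have st: "deutsch_step s" using s unfolding deutsch_step_def by auto
  have len: "length ys = n" using ys by (simp add: deutsch_paths_def)
  show "ss \<in> deutsch_paths t i (Suc n)"
    unfolding deutsch_paths_def
  proof (intro CollectI conjI allI impI ballI)
    show "length ss = Suc n" using len eq by simp
    show "deutsch_step x" if "x \<in> set ss" for x
      using ys that st unfolding deutsch_paths_def eq by auto
    show "sum_list ss = i" using ys unfolding deutsch_paths_def eq by auto
    show "- t \<le> sum_list (take k ss)" if "k \<le> Suc n" for k
    proof (cases "k = Suc n")
      case True
      then have "take k ss = ss" using len eq by simp
      then show ?thesis using ys assms unfolding deutsch_paths_def eq by auto
    next
      case False
      then have "take k ss = take k ys" using that len unfolding eq by simp
      then show ?thesis using ys that False unfolding deutsch_paths_def by auto
    qed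
  qed
qed

lemma paths_finite: "t \<ge> 0 \<Longrightarrow> finite (deutsch_paths t i n)"
proof (induction n arbitrary: i)
  case 0 then show ?case by (simp add: paths_0)
next
  case (Suc n)
  show ?case
  proof (cases "i < -t")
    case True then show ?thesis by (simp add: paths_Suc_neg)
  next
    case False then show ?thesis using Suc by (simp add: paths_Suc)
  qed
qed

lemma count_Suc:
  assumes t: "t \<ge> 0"
  shows "deutsch_count t i (Suc n) = (if i < -t then 0 else
     deutsch_count t (i-1) n + (\<Sum>h\<in>{i+1..int n}. deutsch_count t h n))"
proof (cases "i < -t")
  case True then show ?thesis by (simp add: deutsch_count_def paths_Suc_neg)
next
  case False
  have "deutsch_count t i (Suc n) = (\<Sum>s\<in>insert 1 {i - int n..-1}. card ((\<lambda>ss. ss@[s]) ` deutsch_paths t (i-s) n))"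
    unfolding deutsch_count_def using False
    apply (subst paths_Suc)
    apply simp
    apply (rule card_UN_disjoint)
    apply (auto simp: paths_finite[OF t])
    done
  also have "\<dots> = (\<Sum>s\<in>insert 1 {i - int n..-1}. deutsch_count t (i-s) n)"
    by (intro sum.cong refl) (simp add: deutsch_count_def card_image inj_on_def)
  also have "\<dots> = deutsch_count t (i-1) n + (\<Sum>s\<in>{i - int n..-1}. deutsch_count t (i-s) n)"
    by simp
  also have "(\<Sum>s\<in>{i - int n..-1}. deutsch_count t (i-s) n) = (\<Sum>h\<in>{i+1..int n}. deutsch_count t h n)"
    by (rule sum.reindex_bij_witness[of _ "\<lambda>h. i - h" "\<lambda>s. i - s"]) auto
  finally show ?thesis using False by simp
qed

lemma core_pos:
  fixes v ai Q K :: "'a::idom"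
  shows "(1+v)*ai = 1 \<Longrightarrow> (1+v+v^2)*(Q*(v*ai)*K) - (1+v+v^2)*(Q*(v*ai)^2*K) = v*(Q*K - Q*(v*ai)*K + Q*(v*ai)^2*K)"
  by algebra

lemma core_neg:
  fixes v A V F :: "'a::idom"
  shows "(1+v+v^2)*(A*(1+v)*(1-V*v)*F) - (1+v+v^2)*(A*(1-V*v^2)*F) = v*(A*(1+v)^2*(1-V)*F - A*(1+v)*(1-V*v)*F + A*(1-V*v^2)*F)"
  by algebra

lemma core_m1:
  fixes v ai bi V :: "'a::idom"
  shows "(1+v)*ai = 1 \<Longrightarrow> (1-v)*bi = 1 \<Longrightarrow> (1+v+v^2)*((1+v)*ai^2*(1-V*v)*v*bi) - (1+v+v^2)*(ai^2*(1-V*v^3)*bi)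
     = -1 + v*((1+v)^2*ai^2*(1-V)*v*bi - (1+v)*ai^2*(1-V*v)*v*bi + ai^2*(1-V*v^3)*bi)"
  by algebra

lemma core_0:
  fixes v ai bi V :: "'a::idom"
  shows "(1+v)*ai = 1 \<Longrightarrow> (1-v)*bi = 1 \<Longrightarrow> (1+v+v^2)*(ai^2*(1-V*v^2)*bi) - (1+v+v^2)*((v*ai)*ai^2*(1-V*v^2)*bi)
     = 1 + v*((1+v)*ai^2*(1-V)*v*bi - ai^2*(1-V*v^2)*bi + (v*ai)*ai^2*(1-V*v^2)*bi)"
  by algebra

definition Hp :: "real fps \<Rightarrow> nat \<Rightarrow> nat \<Rightarrow> real fps" where
  "Hp v T p = (v * inverse (1+v))^p * inverse (1+v)^2 * (1 - v^(T+2)) * inverse (1-v)"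

definition Hn :: "real fps \<Rightarrow> nat \<Rightarrow> nat \<Rightarrow> real fps" where
  "Hn v T m = (1+v)^m * inverse (1+v)^2 * (1 - v^(T+1-m)) * v * inverse (1-v)"

definition Hs :: "real fps \<Rightarrow> nat \<Rightarrow> int \<Rightarrow> real fps" where
  "Hs v T i = (if i < - int T - 1 then 0 else if i < 0 then Hn v T (nat (-i)) else Hp v T (nat i))"

lemma Dh:
  fixes v :: "real fps"
  assumes ai: "(1+v) * inverse (1+v) = 1" and bi: "(1-v) * inverse (1-v) = 1"
    and i: "i \<ge> - int T"
  shows "(1+v+v^2) * Hs v T i - (1+v+v^2) * Hs v T (i+1)
     = (if i = 0 then 1 else 0) - (if i = -1 then 1 else 0) + v * (Hs v T (i-1) - Hs v T i + Hs v T (i+1))"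
proof -
  define a where "a = inverse (1+v)"
  define b where "b = inverse (1-v)"
  have ai': "(1+v)*a = 1" using ai by (simp add: a_def)
  have bi': "(1-v)*b = 1" using bi by (simp add: b_def)
  consider (pos) "i \<ge> 1" | (zero) "i = 0" | (m1) "i = -1" | (neg) "i \<le> -2" by linarith
  then show ?thesis
  proof cases
    case pos
    define q where "q = nat (i - 1)"
    have iq: "i = int q + 1" using pos by (simp add: q_def)
    define K where "K = a^2 * (1 - v^(T+2)) * b"
    have h0: "Hs v T (i-1) = (v*a)^q * K" unfolding Hs_def Hp_def K_def a_def b_def using iq
      by (simp add: mult_ac)
    have h1: "Hs v T i = (v*a)^q * (v*a) * K" unfolding Hs_def Hp_def K_def a_def b_def using iq
      by (simp add: mult_ac nat_add_distrib)
    have h2: "Hs v T (i+1) = (v*a)^q * (v*a)^2 * K" unfolding Hs_def Hp_def K_def a_def b_def using iq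
      by (simp add: mult_ac nat_add_distrib power_add power2_eq_square)
    show ?thesis using core_pos[OF ai', of "(v*a)^q" K] pos unfolding h0 h1 h2 by simp
  next
    case zero
    define V where "V = v^T"
    have h0: "Hs v T (i-1) = (1+v)*a^2*(1-V)*v*b" unfolding Hs_def Hn_def a_def b_def V_def using zero
      by (simp add: mult_ac)
    have h1: "Hs v T i = a^2*(1-V*v^2)*b" unfolding Hs_def Hp_def a_def b_def V_def using zero
      by (simp add: mult_ac power_add power2_eq_square)
    have h2: "Hs v T (i+1) = (v*a)*a^2*(1-V*v^2)*b" unfolding Hs_def Hp_def a_def b_def V_def using zero
      by (simp add: mult_ac power_add power2_eq_square)
    show ?thesis using core_0[OF ai' bi', of V] zero unfolding h0 h1 h2 by simp
  next
    case m1
    then have T1: "T \<ge> 1" using i by simp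
    define l where "l = T - 1"
    have Tl: "T = Suc l" using T1 by (simp add: l_def)
    define V where "V = v^l"
    have h0: "Hs v T (i-1) = (1+v)^2*a^2*(1-V)*v*b" unfolding Hs_def Hn_def a_def b_def V_def using m1 Tl
      by (simp add: mult_ac)
    have h1: "Hs v T i = (1+v)*a^2*(1-V*v)*v*b" unfolding Hs_def Hn_def a_def b_def V_def using m1 Tl
      by (simp add: mult_ac)
    have h2: "Hs v T (i+1) = a^2*(1-V*v^3)*b" unfolding Hs_def Hp_def a_def b_def V_def using m1 Tl
      by (simp add: mult_ac power_add numeral_eq_Suc)
    show ?thesis using core_m1[OF ai' bi', of V] m1 unfolding h0 h1 h2 by simp
  next
    case neg
    define k where "k = nat (-i - 1)"
    have ik: "i = - int k - 1" "k \<ge> 1" "k + 1 \<le> T" using neg i by (simp_all add: k_def)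
    define l where "l = T - k - 1"
    define V where "V = v^l"
    define A where "A = (1+v)^k"
    define F where "F = a^2 * v * b"
    have e0: "T + 1 - (k+2) = l" "T + 1 - (k+1) = Suc l" "T + 1 - k = Suc (Suc l)"
      using ik by (simp_all add: l_def)
    have h0: "Hs v T (i-1) = A*(1+v)^2*(1-V)*F" unfolding Hs_def Hn_def a_def b_def V_def A_def F_def using ik e0
      by (simp add: mult_ac nat_add_distrib power_add power2_eq_square)
    have h1: "Hs v T i = A*(1+v)*(1-V*v)*F" unfolding Hs_def Hn_def a_def b_def V_def A_def F_def using ik e0
      by (simp add: mult_ac nat_add_distrib power_add)
    have h2: "Hs v T (i+1) = A*(1-V*v^2)*F" unfolding Hs_def Hn_def a_def b_def V_def A_def F_def using ik e0
      by (simp add: mult_ac nat_add_distrib power_add power2_eq_square)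
    show ?thesis using core_neg[of v A V F] neg unfolding h0 h1 h2 by simp
  qed
qed

definition Gs :: "real fps \<Rightarrow> nat \<Rightarrow> int \<Rightarrow> real fps" where
  "Gs v T i = (1+v+v^2) * Hs v T i"

lemma unit_inv: "fps_nth (f::real fps) 0 = 1 \<Longrightarrow> f * inverse f = 1"
  by (rule inverse_mult_eq_1') simp

lemma D:
  fixes v :: "real fps"
  assumes v0: "fps_nth v 0 = 0" and hX: "fps_X * (1+v+v^2) = v" and i: "i \<ge> - int T"
  shows "Gs v T i - Gs v T (i+1)
     = (if i = 0 then 1 else 0) - (if i = -1 then 1 else 0) + fps_X * (Gs v T (i-1) - Gs v T i + Gs v T (i+1))"
proof -
  have ai: "(1+v) * inverse (1+v) = 1" by (rule unit_inv) (simp add: v0)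
  have bi: "(1-v) * inverse (1-v) = 1" by (rule unit_inv) (simp add: v0)
  have "fps_X * (Gs v T (i-1) - Gs v T i + Gs v T (i+1))
      = (fps_X * (1+v+v^2)) * (Hs v T (i-1) - Hs v T i + Hs v T (i+1))"
    unfolding Gs_def by (simp add: algebra_simps)
  also have "\<dots> = v * (Hs v T (i-1) - Hs v T i + Hs v T (i+1))" using hX by simp
  finally show ?thesis using Dh[OF ai bi i] unfolding Gs_def by simp
qed

lemma D_nth:
  fixes v :: "real fps"
  assumes v0: "fps_nth v 0 = 0" and hX: "fps_X * (1+v+v^2) = v" and i: "i \<ge> - int T"
  shows "fps_nth (Gs v T i) (Suc n) - fps_nth (Gs v T (i+1)) (Suc n) = fps_nth (Gs v T (i-1)) (n) - fps_nth (Gs v T i) (n) + fps_nth (Gs v T (i+1)) (n)"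
proof -
  have "fps_nth (Gs v T i - Gs v T (i+1)) (Suc n)
     = fps_nth (((if i = 0 then 1 else 0) - (if i = -1 then 1 else 0) + fps_X * (Gs v T (i-1) - Gs v T i + Gs v T (i+1)))) (Suc n)"
    using D[OF v0 hX i] by simp
  then show ?thesis by simp
qed

lemma Gs_low: "i < - int T \<Longrightarrow> Gs v T i = 0"
  unfolding Gs_def Hs_def Hn_def
  by (cases "i < - int T - 1") (auto simp: nat_add_distrib)

lemma Gs_0:
  fixes v :: "real fps"
  assumes v0: "fps_nth v 0 = 0"
  shows "fps_nth (Gs v T i) (0) = (if i = 0 then 1 else 0)"
  unfolding Gs_def Hs_def Hn_def Hp_def using v0
  by (auto simp: fps_nth_power_0 zero_power)

lemma X_factor:
  fixes v :: "real fps"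
  assumes v0: "fps_nth v 0 = 0"
  shows "v = fps_X * fps_shift 1 v"
  by (rule fps_ext) (auto simp: v0)

lemma Gs_high:
  fixes v :: "real fps"
  assumes v0: "fps_nth v 0 = 0" and "int n < i"
  shows "fps_nth (Gs v T i) (n) = 0"
proof -
  define p where "p = nat i"
  have ip: "i = int p" "n < p" using assms by (auto simp: p_def)
  define w where "w = fps_shift 1 v"
  define R where "R = (1+v+v^2) * inverse (1+v)^p * inverse (1+v)^2 * (1 - v^(T+2)) * inverse (1-v)"
  have g: "Gs v T i = v^p * R"
    unfolding Gs_def Hs_def Hp_def R_def using ip by (simp add: power_mult_distrib mult_ac)
  have vp: "v^p = fps_X^p * w^p"
    unfolding w_def by (subst X_factor[OF v0]) (simp add: power_mult_distrib)
  have "Gs v T i = fps_X^p * (w^p * R)" unfolding g vp by (simp add: mult_ac)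
  then show ?thesis using ip by (simp add: fps_X_power_mult_nth)
qed

lemma Gs_rec:
  fixes v :: "real fps"
  assumes v0: "fps_nth v 0 = 0" and hX: "fps_X * (1+v+v^2) = v"
  shows "fps_nth (Gs v T i) (Suc n) = (if i < - int T then 0 else
           fps_nth (Gs v T (i-1)) (n) + (\<Sum>h\<in>{i+1..int n}. fps_nth (Gs v T h) (n)))"
proof (cases "i < - int T")
  case True then show ?thesis by (simp add: Gs_low)
next
  case False
  define r where "r j = fps_nth (Gs v T j) (Suc n) - fps_nth (Gs v T (j-1)) (n) - (\<Sum>h\<in>{j+1..int n}. fps_nth (Gs v T h) (n))" for j
  have step: "r j = r (j+1)" if j: "j \<ge> - int T" for j
  proof -
    have "(\<Sum>h\<in>{j+1..int n}. fps_nth (Gs v T h) (n)) = fps_nth (Gs v T (j+1)) (n) + (\<Sum>h\<in>{j+2..int n}. fps_nth (Gs v T h) (n))"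
    proof (cases "j + 1 \<le> int n")
      case True
      have "{j+1..int n} = insert (j+1) {j+2..int n}" using True by auto
      then show ?thesis by simp
    next
      case False
      then show ?thesis using Gs_high[OF v0, of n "j+1" T] by simp
    qed
    then show ?thesis unfolding r_def using D_nth[OF v0 hX j, of n] by (simp add: algebra_simps)
  qed
  have top: "r j = 0" if "j \<ge> int n + 2" for j
    unfolding r_def using that Gs_high[OF v0, of "Suc n" j T] Gs_high[OF v0, of n "j-1" T] by simp
  have "\<forall>j. j = int n + 2 - int k \<longrightarrow> j \<ge> - int T \<longrightarrow> r j = 0" for k
  proof (induction k)
    case 0 then show ?case using top by simp
  next
    case (Suc k)
    show ?case
    proof (intro allI impI)
      fix j assume j: "j = int n + 2 - int (Suc k)" "j \<ge> - int T"
      have e: "j + 1 = int n + 2 - int k" using j by simp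
      have "j + 1 \<ge> - int T" using j by simp
      then have "r (j+1) = 0" using Suc.IH e by blast
      then show "r j = 0" using step[OF j(2)] by simp
    qed
  qed
  note allk = this
  have "r i = 0"
  proof (cases "i \<ge> int n + 2")
    case True then show ?thesis by (rule top)
  next
    case F2: False
    show ?thesis using allk[of "nat (int n + 2 - i)"] F2 False by simp
  qed
  then show ?thesis using False unfolding r_def by simp
qed

lemma count_eq:
  fixes v :: "real fps"
  assumes v0: "fps_nth v 0 = 0" and hX: "fps_X * (1+v+v^2) = v"
  shows "\<forall>i. fps_nth (Gs v T i) n = real (deutsch_count (int T) i n)"
proof (induction n)
  case 0
  show ?case by (simp add: Gs_0[OF v0] deutsch_count_def paths_0)
next
  case (Suc n)
  show ?case
  proof
    fix i
    show "fps_nth (Gs v T i) (Suc n) = real (deutsch_count (int T) i (Suc n))"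
      unfolding Gs_rec[OF v0 hX] count_Suc[of "int T", OF of_nat_0_le_iff]
      using Suc.IH by simp
  qed
qed

theorem theorem6:
  fixes t i :: int and v Phi :: "real fps"
  assumes "t \<ge> 0" and "i \<ge> -t"
    and "Phi = Abs_fps (\<lambda>n. real (deutsch_count t i n))"
    and "fps_nth v 0 = 0"
    and "fps_X = v / (1 + v + v\<^sup>2)"
  shows "(i < 0 \<longrightarrow> Phi = (1 + v) powi (-i - 2) * (1 - v powi (i + t + 1)) * v * (1 + v + v\<^sup>2)
                             / (1 - v))
       \<and> (i \<ge> 0 \<longrightarrow> Phi = v powi i * (1 - v powi (t + 2)) * (1 + v + v\<^sup>2)
                             / ((1 - v) * (1 + v) powi (i + 2)))"
proof -
  define T where "T = nat t"
  have tT: "t = int T" using assms(1) by (simp add: T_def)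
  have v0: "fps_nth v 0 = 0" by fact
  have ci: "inverse (1+v+v^2) * (1+v+v^2) = 1" by (rule inverse_mult_eq_1) (simp add: v0 fps_nth_power_0)
  have d: "v / (1+v+v^2) = v * inverse (1+v+v^2)"
    by (rule fps_divide_unit) (simp add: v0 fps_nth_power_0)
  have "fps_X * (1+v+v^2) = v * (inverse (1+v+v^2) * (1+v+v^2))"
    unfolding assms(5) d by (simp add: mult.assoc)
  then have hX: "fps_X * (1+v+v^2) = v" using ci by simp
  have ai: "(1+v) * inverse (1+v) = 1" by (rule unit_inv) (simp add: v0)
  have Phi: "Phi = Gs v T i"
    using count_eq[OF v0 hX, where T=T] assms(3) tT by (intro fps_ext) simp
  have div1: "f / (1 - v) = f * inverse (1 - v)" for f by (rule fps_divide_unit) (simp add: v0)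
  show ?thesis
  proof (intro conjI impI)
    assume neg: "i < 0"
    define m where "m = nat (-i)"
    have im: "i = - int m" "m \<ge> 1" "m \<le> T" using neg assms(2) tT by (auto simp: m_def)
    have ep: "v powi (i + t + 1) = v^(T+1-m)"
    proof -
      have "i + t + 1 = int (T+1-m)" using im tT by simp
      then show ?thesis by simp
    qed
    have ap: "(1 + v) powi (-i - 2) = (1+v)^m * inverse (1+v)^2"
    proof (cases "m \<ge> 2")
      case True
      have "-i - 2 = int (m-2)" using im True by simp
      then have "(1 + v) powi (-i - 2) = (1+v)^(m-2)" by simp
      also have "\<dots> = (1+v)^(m-2) * ((1+v) * inverse (1+v))^2" using ai by simp
      also have "\<dots> = (1+v)^m * inverse (1+v)^2"
      proof -
        have "(1+v)^m = (1+v)^(m-2) * (1+v)^2" using True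
          by (metis le_add_diff_inverse2 power_add)
        then show ?thesis by (simp add: power_mult_distrib mult_ac)
      qed
      finally show ?thesis .
    next
      case False
      then have "m = 1" using im by simp
      then have "-i - 2 = -1" using im by simp
      then have "(1 + v) powi (-i - 2) = inverse (1+v)" by (simp add: power_int_def)
      also have "\<dots> = (1+v) * inverse (1+v) * inverse (1+v)" using ai by simp
      finally show ?thesis using \<open>m = 1\<close> by (simp add: power2_eq_square mult_ac)
    qed
    have "Gs v T i = (1+v+v^2) * Hn v T m"
      unfolding Gs_def Hs_def using im by simp
    then show "Phi = (1 + v) powi (-i - 2) * (1 - v powi (i + t + 1)) * v * (1 + v + v\<^sup>2) / (1 - v)"
      unfolding Phi ep ap div1 Hn_def by (simp add: mult_ac)
  next
    assume pos: "i \<ge> 0"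
    define p where "p = nat i"
    have ip: "i = int p" using pos by (simp add: p_def)
    have e1: "v powi i = v^p" using ip by simp
    have e2: "v powi (t+2) = v^(T+2)"
    proof -
      have h: "t + 2 = int (T+2)" using tT by simp
      show ?thesis unfolding h power_int_of_nat ..
    qed
    have e3: "(1+v) powi (i+2) = (1+v)^(p+2)"
    proof -
      have h: "i + 2 = int (p+2)" using ip by simp
      show ?thesis unfolding h power_int_of_nat ..
    qed
    have div2: "f / ((1 - v) * (1+v)^(p+2)) = f * (inverse (1 - v) * inverse (1+v)^(p+2))" for f
      by (subst fps_divide_unit) (simp_all add: v0 fps_inverse_mult fps_inverse_power)
    have "Gs v T i = (1+v+v^2) * Hp v T p"
      unfolding Gs_def Hs_def using ip by simp
    then show "Phi = v powi i * (1 - v powi (t + 2)) * (1 + v + v\<^sup>2) / ((1 - v) * (1 + v) powi (i + 2))"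
      unfolding Phi e1 e2 e3 div2 Hp_def by (simp add: mult_ac power_mult_distrib power_add power2_eq_square)
  qed
qed
end
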